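(* Let $\beta,\gamma\in(0,1)$ with $\beta\neq\gamma$, and let $\lambda=\frac{1-\beta}{1-\gamma}$. Let $\mathcal{T}$ be the graph with root $\rho$ consisting of a triangle together with the extra vertex $\rho$ attached by an edge to one vertex of the triangle. Then the effective field $R$ of $\mathcal{T}$ satisfies $R\neq1$ and $R\in(\gamma,1/\beta)$.
   Context: For a graph $G=(V,E)$ and $\lambda>0$, $\mu_{G;\beta,\gamma,\lambda}(\sigma)=\lambda^{|\sigma|}\beta^{m_0(\sigma)}\gamma^{m_1(\sigma)}/Z$ for $\sigma:V\to\{0,1\}$, $|\sigma|=\sum_v\sigma(v)$, $m_0,m_1$ the numbers of edges with both endpoints spin $0$, resp. spin $1$. For a graph with distinguished root $\rho$ and $\mu=\mu_{\mathcal{T};\beta,\gamma,\lambda}$, the effective field is $R=\frac{1}{\lambda}\frac{\mu(\sigma(\rho)=1)}{\mu(\sigma(\rho)=0)}$. *)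

theory Defs
  imports Main "HOL.Real"
begin

text \<open>A spin configuration \<sigma> : V \<rightarrow> {0,1} is encoded by the set S = {v. \<sigma> v = 1} \<subseteq> V.\<close>

definition spin_weight ::
  "'v set \<Rightarrow> 'v set set \<Rightarrow> real \<Rightarrow> real \<Rightarrow> real \<Rightarrow> 'v set \<Rightarrow> real" where
  "spin_weight V E \<beta> \<gamma> lam S =
     lam ^ card S * \<beta> ^ card {e \<in> E. e \<subseteq> V - S} * \<gamma> ^ card {e \<in> E. e \<subseteq> S}"

definition partition_fn :: "'v set \<Rightarrow> 'v set set \<Rightarrow> real \<Rightarrow> real \<Rightarrow> real \<Rightarrow> real" where
  "partition_fn V E \<beta> \<gamma> lam = (\<Sum>S\<in>Pow V. spin_weight V E \<beta> \<gamma> lam S)"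

definition gibbs_prob ::
  "'v set \<Rightarrow> 'v set set \<Rightarrow> real \<Rightarrow> real \<Rightarrow> real \<Rightarrow> ('v set \<Rightarrow> bool) \<Rightarrow> real" where
  "gibbs_prob V E \<beta> \<gamma> lam A =
     (\<Sum>S\<in>{S\<in>Pow V. A S}. spin_weight V E \<beta> \<gamma> lam S) / partition_fn V E \<beta> \<gamma> lam"

definition effective_field ::
  "'v set \<Rightarrow> 'v set set \<Rightarrow> 'v \<Rightarrow> real \<Rightarrow> real \<Rightarrow> real \<Rightarrow> real" where
  "effective_field V E \<rho> \<beta> \<gamma> lam =
     (1 / lam) * (gibbs_prob V E \<beta> \<gamma> lam (\<lambda>S. \<rho> \<in> S) / gibbs_prob V E \<beta> \<gamma> lam (\<lambda>S. \<rho> \<notin> S))"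

definition tri_V :: "nat set" where "tri_V = {0, 1, 2, 3}"
definition tri_E :: "nat set set" where "tri_E = {{0, 1}, {1, 2}, {2, 3}, {1, 3}}"

end

theory Submission
  imports Defs
begin
lemma sum_Pow_insert:
  assumes "finite A" "a \<notin> A"
  shows "sum f (Pow (insert a A)) = sum f (Pow A) + sum (\<lambda>S. f (insert a S)) (Pow A)"
proof -
  have d: "Pow A \<inter> insert a ` Pow A = {}" using assms by auto
  have i: "inj_on (insert a) (Pow A)" using assms unfolding inj_on_def
    by (metis Diff_insert_absorb PowD subsetD)
  show ?thesis unfolding Pow_insert
    using sum.union_disjoint[OF _ _ d, of f] sum.reindex[OF i, of f] assms by simp
qed

lemma cardE: "card {e\<in>tri_E. P e} = (if P {0,1} then 1 else 0) + (if P {1,2} then 1 else 0)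
   + (if P {2,3} then 1 else 0) + (if P {1,3} then 1 else 0)"
proof -
  have "card {e\<in>tri_E. P e} = (\<Sum>e\<in>tri_E. if P e then 1 else 0)"
    unfolding card_eq_sum by (rule sum.inter_filter) (simp add: tri_E_def)
  also have "\<dots> = (if P {0,1} then 1 else 0) + (if P {1,2} then 1 else 0)
   + (if P {2,3} then 1 else 0) + (if P {1,3} then 1 else 0)"
  proof -
    have a: "{0::nat,1} \<notin> {{1,2},{2,3},{1,3}}" "{1::nat,2} \<notin> {{2,3},{1,3}}" "{2::nat,3} \<notin> {{1,3}}"
      by (auto simp: doubleton_eq_iff)
    show ?thesis unfolding tri_E_def using a by (simp add: sum.insert)
  qed
  finally show ?thesis .
qed

lemma sfilt: "finite V \<Longrightarrow> (\<Sum>S\<in>{S\<in>Pow V. P S}. w S) = (\<Sum>S\<in>Pow V. if P S then w S else 0)"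
  by (rule sum.inter_filter) simp

lemma PV: "sum f (Pow tri_V) = f {} + f {3} + f {2} + f {2,3} + f {1} + f{1,3} + f{1,2} + f{1,2,3}
  + f {0} + f {0,3} + f {0,2} + f {0,2,3} + f {0,1} + f{0,1,3} + f{0,1,2} + f{0,1,2,3}"
  unfolding tri_V_def by (simp add: sum_Pow_insert add.assoc)

lemma Z1: "(\<Sum>S\<in>{S\<in>Pow tri_V. 0 \<in> S}. spin_weight tri_V tri_E b g l S) =
   l * ((b^3 + 2*l*b + l^2*g) + g * (l*(b + 2*l*g + l^2*g^3)))"
  apply (subst sfilt, simp add: tri_V_def)
  apply (simp only: PV)
  apply (simp only: spin_weight_def cardE)
  apply (simp add: tri_V_def)
  apply (simp add: algebra_simps power2_eq_square power3_eq_cube)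
  done

lemma Z0: "(\<Sum>S\<in>{S\<in>Pow tri_V. 0 \<notin> S}. spin_weight tri_V tri_E b g l S) =
   b*(b^3 + 2*l*b + l^2*g) + (l*(b + 2*l*g + l^2*g^3))"
  apply (subst sfilt, simp add: tri_V_def)
  apply (simp only: PV)
  apply (simp only: spin_weight_def cardE)
  apply (simp add: tri_V_def)
  apply (simp add: algebra_simps power2_eq_square power3_eq_cube)
  done

theorem lemma4p1:
  fixes \<beta> \<gamma> lam :: real
  assumes "0 < \<beta>" "\<beta> < 1" "0 < \<gamma>" "\<gamma> < 1" "\<beta> \<noteq> \<gamma>"
    and "lam = (1 - \<beta>) / (1 - \<gamma>)"
  shows "effective_field tri_V tri_E 0 \<beta> \<gamma> lam \<noteq> 1
       \<and> effective_field tri_V tri_E 0 \<beta> \<gamma> lam \<in> {\<gamma> <..< 1 / \<beta>}"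
proof -
  define b g l where "b = \<beta>" "g = \<gamma>" "l = lam"
  have b: "0 < b" "b < 1" and g: "0 < g" "g < 1" and bg: "b \<noteq> g" using assms by (auto simp: b_g_l_def)
  have hl: "l * (1 - g) = 1 - b" using assms g by (simp add: b_g_l_def)
  have l: "0 < l" using assms by (simp add: b_g_l_def)
  define W0 where "W0 = b^3 + 2*l*b + l^2*g"
  define V where "V = b + 2*l*g + l^2*g^3"
  have W0: "W0 > 0" unfolding W0_def using b g l by (simp add: add_pos_pos)
  have V: "V > 0" unfolding V_def using b g l by (simp add: add_pos_pos)
  have Z1: "(\<Sum>S\<in>{S\<in>Pow tri_V. 0 \<in> S}. spin_weight tri_V tri_E b g l S) = l * (W0 + g*(l*V))"
    unfolding W0_def V_def by (rule Z1)
  have Z0: "(\<Sum>S\<in>{S\<in>Pow tri_V. 0 \<notin> S}. spin_weight tri_V tri_E b g l S) = b*W0 + l*V"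
    unfolding W0_def V_def by (rule Z0)
  define Z where "Z = partition_fn tri_V tri_E b g l"
  have fin: "finite tri_V" by (simp add: tri_V_def)
  have Zp: "Z > 0"
  proof -
    have "Z = (\<Sum>S\<in>{S\<in>Pow tri_V. 0 \<in> S}. spin_weight tri_V tri_E b g l S)
       + (\<Sum>S\<in>{S\<in>Pow tri_V. 0 \<notin> S}. spin_weight tri_V tri_E b g l S)"
      unfolding Z_def partition_fn_def
      apply (subst (1 2) sfilt[OF fin])
      apply (subst sum.distrib[symmetric])
      apply (rule sum.cong, auto)
      done
    then show ?thesis unfolding Z1 Z0 using W0 V b g l by (simp add: add_pos_pos)
  qed
  have den: "b*W0 + l*V > 0" using W0 V b l by (simp add: add_pos_pos)
  have R: "effective_field tri_V tri_E 0 \<beta> \<gamma> lam = (W0 + g*(l*V)) / (b*W0 + l*V)"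
    unfolding effective_field_def gibbs_prob_def b_g_l_def[symmetric] Z1 Z0 Z_def[symmetric]
  proof -
    have e1: "(l * (W0 + g*(l*V)) / Z) / ((b*W0 + l*V) / Z) = l * (W0 + g*(l*V)) / (b*W0 + l*V)"
      using Zp by simp
    have e2: "(1/l) * (l * (W0 + g*(l*V)) / (b*W0 + l*V)) = (W0 + g*(l*V)) / (b*W0 + l*V)"
      using l by simp
    show "1 / l * ((l * (W0 + g * (l * V)) / Z) / ((b * W0 + l * V) / Z)) = (W0 + g*(l*V)) / (b*W0 + l*V)"
      unfolding e1 e2 ..
  qed
  have beq: "b = 1 - l*(1-g)" using hl by simp
  have key: "W0 - V = (1-b)^2*(b-g)"
    unfolding W0_def V_def beq by (simp add: algebra_simps power2_eq_square power3_eq_cube)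
  have WV: "W0 \<noteq> V" using key b bg by auto
  have ne: "W0 + g*(l*V) \<noteq> b*W0 + l*V"
  proof
    assume "W0 + g*(l*V) = b*W0 + l*V"
    then have "(1-b)*W0 = (l*(1-g))*V" by (simp add: algebra_simps)
    then have "(1-b)*W0 = (1-b)*V" using hl by simp
    with b WV show False by simp
  qed
  have gb: "g*b < 1" using b g by (metis mult_strict_mono' mult_1_right less_eq_real_def)
  have lV: "l*V > 0" using l V by simp
  have lo: "g < (W0 + g*(l*V)) / (b*W0 + l*V)"
  proof -
    have "(g*b)*W0 < 1*W0" using gb W0 by (intro mult_strict_right_mono) auto
    then have "g*(b*W0 + l*V) < W0 + g*(l*V)" by (simp add: algebra_simps)
    then show ?thesis using den by (simp add: pos_less_divide_eq)
  qed
  have hi: "(W0 + g*(l*V)) / (b*W0 + l*V) < 1/b"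
  proof -
    have "(g*b)*(l*V) < 1*(l*V)" using gb lV by (intro mult_strict_right_mono) auto
    then have "b*(W0 + g*(l*V)) < b*W0 + l*V" by (simp add: algebra_simps)
    then show ?thesis using den b by (simp add: divide_less_eq field_simps)
  qed
  show ?thesis unfolding R using ne den lo hi by (simp add: b_g_l_def)
qed
end
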